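(* Let $(\mathbb P_\alpha)$ be a tight family of measures in $\mathfrak M_{fin}(\mathfrak M_{fin}((0,+\infty)))$, each supported on the set $\mathfrak s\Omega_P$. Then the family $(\mathfrak p\mathbb P_\alpha)$ of measures on $\Omega_P$ is also tight.
   Context: For a metric space $X$, $\mathfrak M_{fin}(X)$ denotes the space of finite Borel measures on $X$ with the weak topology (convergence of integrals of bounded continuous functions). The Pickrell set is $$\Omega_P=\Big\{\omega=(\gamma,x):\ \gamma\in\mathbb R,\ x=(x_1,x_2,\dots),\ x_1\ge x_2\ge\dots\ge0,\ \sum_{i}x_i\le\gamma\Big\},$$ with the topology induced from the product topology on $\mathbb R\times\mathbb R^{\mathbb N}$; write $\gamma(\omega)=\gamma$, $x_i(\omega)=x_i$. Let $\Omega_P^0=\{\omega\in\Omega_P:\gamma(\omega)=\sum_i x_i(\omega)\}$. Define $\mathfrak s:\Omega_P\to\mathfrak M_{fin}((0,+\infty))$ by $\mathfrak s(\omega)=\sum_{i:\,x_i(\omega)>0}\min(x_i(\omega),1)\,\delta_{x_i(\omega)}$. The map $\mathfrak s$ is injective on $\Omega_P^0$ and $\mathfrak s(\Omega_P^0)=\mathfrak s\Omega_P$. For a finite Borel measure $\mathbb P$ on $\mathfrak M_{fin}((0,+\infty))$ supported on $\mathfrak s\Omega_P$ (i.e. giving zero mass to its complement), $\mathfrak p\mathbb P$ denotes the unique Borel measure on $\Omega_P$ with $\mathfrak s_*\mathfrak p\mathbb P=\mathbb P$ and $\mathfrak p\mathbb P(\Omega_P\setminus\Omega_P^0)=0$.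 *)

theory Defs
  imports "HOL-Probability.Probability"
begin

definition borel_of :: "'a topology \<Rightarrow> 'a measure" where
  "borel_of T = sigma (topspace T) {U. openin T U}"

definition pos_borel :: "real measure" where
  "pos_borel = restrict_space borel {0<..}"

definition Mfin_pos :: "real measure set" where
  "Mfin_pos = {M. sets M = sets pos_borel \<and> finite_measure M}"

definition weak_top :: "real measure topology" where
  "weak_top = subtopology
     (topology_generated_by
        {{M \<in> Mfin_pos. (\<integral>x. f x \<partial>M) \<in> U} | f U.
           continuous_on {0<..} f \<and> bounded (f ` {0<..}) \<and> open (U :: real set)})
     Mfin_pos"

definition Omega_P :: "(real \<times> (nat \<Rightarrow> real)) set" where
  "Omega_P = {(\<gamma>, x). (\<forall>i. x i \<ge> x (Suc i)) \<and> (\<forall>i. x i \<ge> 0) \<and>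
                       summable x \<and> (\<Sum>i. x i) \<le> \<gamma>}"

definition Omega_P0 :: "(real \<times> (nat \<Rightarrow> real)) set" where
  "Omega_P0 = {\<omega> \<in> Omega_P. fst \<omega> = (\<Sum>i. snd \<omega> i)}"

definition frak_s :: "real \<times> (nat \<Rightarrow> real) \<Rightarrow> real measure" where
  "frak_s \<omega> = measure_of (space pos_borel) (sets pos_borel)
     (\<lambda>A. \<Sum>i. (if snd \<omega> i > 0 then ennreal (min (snd \<omega> i) 1) else 0)
                * indicator A (snd \<omega> i))"

definition tight_family :: "'a topology \<Rightarrow> 'i set \<Rightarrow> ('i \<Rightarrow> 'a measure) \<Rightarrow> bool" where
  "tight_family T I P \<longleftrightarrow>
     (\<forall>\<epsilon>>0. \<exists>K. compactin T K \<and>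
        (\<forall>\<alpha>\<in>I. topspace T - K \<in> sets (P \<alpha>) \<and> emeasure (P \<alpha>) (topspace T - K) < ennreal \<epsilon>))"

end

theory Submission
  imports Defs
begin

definition wt :: "real \<times> (nat \<Rightarrow> real) \<Rightarrow> nat \<Rightarrow> real" where
  "wt \<omega> i = (if snd \<omega> i > 0 then min (snd \<omega> i) 1 else 0)"

definition yt :: "real \<times> (nat \<Rightarrow> real) \<Rightarrow> nat \<Rightarrow> real" where
  "yt \<omega> i = (if snd \<omega> i > 0 then snd \<omega> i else 1)"

definition Nm :: "real \<times> (nat \<Rightarrow> real) \<Rightarrow> real measure" where
  "Nm \<omega> = distr (density (count_space UNIV) (\<lambda>i. ennreal (wt \<omega> i))) pos_borel (yt \<omega>)"

lemma space_pos_borel: "space pos_borel = {0<..}"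
  by (simp add: pos_borel_def)

lemma yt_meas: "yt \<omega> \<in> measurable (density (count_space UNIV) (\<lambda>i. ennreal (wt \<omega> i))) pos_borel"
  by (auto simp: space_pos_borel yt_def)

lemma wt_nonneg: "wt \<omega> i \<ge> 0"
  by (simp add: wt_def)

lemma emeasure_Nm:
  assumes "A \<in> sets pos_borel"
  shows "emeasure (Nm \<omega>) A = (\<Sum>i. ennreal (wt \<omega> i) * indicator A (yt \<omega> i))"
proof -
  have "emeasure (Nm \<omega>) A = emeasure (density (count_space UNIV) (\<lambda>i. ennreal (wt \<omega> i))) (yt \<omega> -` A)"
    unfolding Nm_def using assms yt_meas by (subst emeasure_distr) auto
  also have "\<dots> = (\<integral>\<^sup>+ i. ennreal (wt \<omega> i) * indicator (yt \<omega> -` A) i \<partial>count_space UNIV)"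
    by (subst emeasure_density) auto
  also have "\<dots> = (\<Sum>i. ennreal (wt \<omega> i) * indicator A (yt \<omega> i))"
    by (subst nn_integral_count_space_nat) (simp add: indicator_def)
  finally show ?thesis .
qed

lemma frak_s_eq: "frak_s \<omega> = Nm \<omega>"
proof -
  have "frak_s \<omega> = measure_of (space pos_borel) (sets pos_borel) (emeasure (Nm \<omega>))"
    unfolding frak_s_def
  proof (rule measure_of_eq)
    show "sets pos_borel \<subseteq> Pow (space pos_borel)" by (rule sets.space_closed)
    fix a assume "a \<in> sigma_sets (space pos_borel) (sets pos_borel)"
    then have a: "a \<in> sets pos_borel" by (simp add: sets.sigma_sets_eq)
    show "(\<lambda>A. \<Sum>i. (if snd \<omega> i > 0 then ennreal (min (snd \<omega> i) 1) else 0) * indicator A (snd \<omega> i)) a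
        = emeasure (Nm \<omega>) a"
      unfolding emeasure_Nm[OF a]
      by (intro suminf_cong) (simp add: wt_def yt_def)
  qed
  also have "\<dots> = Nm \<omega>"
    using measure_of_of_measure[of "Nm \<omega>"] by (simp add: Nm_def)
  finally show ?thesis .
qed

lemma summable_wt:
  assumes "\<omega> \<in> Omega_P"
  shows "summable (wt \<omega>)"
proof -
  from assms have s: "summable (snd \<omega>)" and nn: "\<And>i. snd \<omega> i \<ge> 0"
    by (auto simp: Omega_P_def)
  show ?thesis
  proof (rule summable_comparison_test'[OF s])
    fix n show "norm (wt \<omega> n) \<le> snd \<omega> n" using nn[of n] by (auto simp: wt_def)
  qed
qed

lemma wt_le: "wt \<omega> i \<le> 1"
  by (simp add: wt_def)

lemma integral_Nm:
  fixes f :: "real \<Rightarrow> real"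
  assumes om: "\<omega> \<in> Omega_P" and fc: "continuous_on {0<..} f" and fb: "\<And>t. t > 0 \<Longrightarrow> \<bar>f t\<bar> \<le> B"
  shows "summable (\<lambda>i. wt \<omega> i * f (yt \<omega> i))"
    and "(\<integral>t. f t \<partial>Nm \<omega>) = (\<Sum>i. wt \<omega> i * f (yt \<omega> i))"
proof -
  have ypos: "yt \<omega> i > 0" for i by (simp add: yt_def)
  have sm: "summable (\<lambda>i. norm (wt \<omega> i * f (yt \<omega> i)))"
  proof (rule summable_comparison_test'[OF summable_mult2[OF summable_wt[OF om], of B]])
    fix n show "norm (norm (wt \<omega> n * f (yt \<omega> n))) \<le> wt \<omega> n * B"
      using fb[OF ypos[of n]] wt_nonneg[of \<omega> n] by (simp add: abs_mult mult_left_mono)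
  qed
  then show "summable (\<lambda>i. wt \<omega> i * f (yt \<omega> i))"
    by (rule summable_norm_cancel)
  have fm: "f \<in> borel_measurable pos_borel"
    unfolding pos_borel_def by (rule borel_measurable_continuous_on_restrict[OF fc])
  have "(\<integral>t. f t \<partial>Nm \<omega>) = (\<integral>i. f (yt \<omega> i) \<partial>density (count_space UNIV) (\<lambda>i. ennreal (wt \<omega> i)))"
    unfolding Nm_def by (rule integral_distr[OF yt_meas fm])
  also have "\<dots> = (\<integral>i. wt \<omega> i *\<^sub>R f (yt \<omega> i) \<partial>count_space UNIV)"
    by (rule integral_density) (auto simp: wt_nonneg)
  also have "\<dots> = (\<Sum>i. wt \<omega> i * f (yt \<omega> i))"
    using sm by (subst integral_count_space_nat) (auto simp: integrable_count_space_nat_iff)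
  finally show "(\<integral>t. f t \<partial>Nm \<omega>) = (\<Sum>i. wt \<omega> i * f (yt \<omega> i))" .
qed

lemma Nm_Mfin:
  assumes om: "\<omega> \<in> Omega_P"
  shows "frak_s \<omega> \<in> Mfin_pos"
proof -
  have sets: "sets (Nm \<omega>) = sets pos_borel" by (simp add: Nm_def)
  then have sp: "space (Nm \<omega>) = space pos_borel" by (rule sets_eq_imp_space_eq)
  have "emeasure (Nm \<omega>) (space (Nm \<omega>)) = (\<Sum>i. ennreal (wt \<omega> i) * indicator (space pos_borel) (yt \<omega> i))"
    unfolding sp by (rule emeasure_Nm) simp
  also have "\<dots> = (\<Sum>i. ennreal (wt \<omega> i))"
    by (simp add: space_pos_borel yt_def)
  also have "\<dots> = ennreal (\<Sum>i. wt \<omega> i)"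
    using summable_wt[OF om] using summable_wt[OF om] by (intro suminf_ennreal2) (auto simp: wt_nonneg)
  finally have "finite_measure (Nm \<omega>)" by (intro finite_measureI) simp
  then show ?thesis using sets by (simp add: Mfin_pos_def frak_s_eq)
qed

definition hf :: "(real \<Rightarrow> real) \<Rightarrow> real \<Rightarrow> real" where
  "hf f t = (if t > 0 then min t 1 * f t else 0)"

lemma hf_wt: "wt \<omega> i * f (yt \<omega> i) = hf f (snd \<omega> i)"
  by (simp add: wt_def yt_def hf_def)

lemma hf_bound:
  assumes fb: "\<And>t. t > 0 \<Longrightarrow> \<bar>f t\<bar> \<le> B" and t: "t \<ge> 0"
  shows "\<bar>hf f t\<bar> \<le> \<bar>B\<bar> * t"
proof (cases "t > 0")
  case True
  have "\<bar>hf f t\<bar> = min t 1 * \<bar>f t\<bar>" using True by (simp add: hf_def abs_mult)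
  also have "\<dots> \<le> t * \<bar>B\<bar>"
    using fb[OF True] True by (intro mult_mono) auto
  finally show ?thesis by (simp add: mult.commute)
next
  case False
  then show ?thesis using t by (simp add: hf_def)
qed

lemma hf_cont:
  assumes fc: "continuous_on {0<..} f" and fb: "\<And>t. t > 0 \<Longrightarrow> \<bar>f t\<bar> \<le> B"
  shows "continuous_on {0..} (hf f)"
  unfolding continuous_on_eq_continuous_within
proof
  fix t :: real assume t: "t \<in> {0..}"
  show "continuous (at t within {0..}) (hf f)"
  proof (cases "t > 0")
    case True
    have c1: "continuous_on {0<..} (\<lambda>s. min s 1 * f s)"
      by (intro continuous_intros fc)
    have "isCont (\<lambda>s. min s 1 * f s) t"
      using c1 True by (simp add: continuous_on_eq_continuous_at)
    moreover have "eventually (\<lambda>s. hf f s = min s 1 * f s) (nhds t)"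
      using True by (intro eventually_nhds_in_open[of "{0<..}", THEN eventually_mono]) (auto simp: hf_def)
    ultimately have "isCont (hf f) t" using isCont_cong[of "hf f" "\<lambda>s. min s 1 * f s" t] by simp
    then show ?thesis by (rule continuous_at_imp_continuous_at_within)
  next
    case False
    then have t0: "t = 0" using t by auto
    have "(hf f \<longlongrightarrow> 0) (at 0 within {0..})"
    proof (rule Lim_null_comparison)
      show "eventually (\<lambda>s. norm (hf f s) \<le> \<bar>B\<bar> * s) (at 0 within {0..})"
        by (auto simp: eventually_at_filter intro!: always_eventually hf_bound[OF fb])
      show "((\<lambda>s. \<bar>B\<bar> * s) \<longlongrightarrow> 0) (at 0 within {0..})"
        by (intro tendsto_eq_intros) auto
    qed
    then show ?thesis using t0 by (simp add: continuous_within hf_def)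
  qed
qed

lemma tail_bound:
  fixes x a :: "nat \<Rightarrow> real"
  assumes sx: "summable x" and nn: "\<And>i. x i \<ge> 0" and ab: "\<And>i. \<bar>a i\<bar> \<le> B * x i"
  shows "summable a" and "\<bar>(\<Sum>i. a i) - (\<Sum>i<N. a i)\<bar> \<le> B * ((\<Sum>i. x i) - (\<Sum>i<N. x i))"
proof -
  have sB: "summable (\<lambda>i. B * x i)" using sx by (rule summable_mult)
  show sa: "summable a"
    by (rule summable_comparison_test'[OF sB]) (use ab in auto)
  have sa': "summable (\<lambda>i. a (i + N))" using sa by (rule summable_ignore_initial_segment)
  have sB': "summable (\<lambda>i. B * x (i + N))" using sB by (rule summable_ignore_initial_segment)
  have e1: "(\<Sum>i. a i) - (\<Sum>i<N. a i) = (\<Sum>i. a (i + N))"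
    using suminf_split_initial_segment[OF sa, of N] by simp
  have e2: "(\<Sum>i. x i) - (\<Sum>i<N. x i) = (\<Sum>i. x (i + N))"
    using suminf_split_initial_segment[OF sx, of N] by simp
  have "(\<Sum>i. a (i + N)) \<le> (\<Sum>i. B * x (i + N))"
    by (rule suminf_le[OF _ sa' sB']) (use ab in \<open>auto simp: abs_le_iff\<close>)
  moreover have "- (\<Sum>i. a (i + N)) \<le> (\<Sum>i. B * x (i + N))"
  proof -
    have "(\<Sum>i. - a (i + N)) \<le> (\<Sum>i. B * x (i + N))"
      by (rule suminf_le[OF _ summable_minus[OF sa'] sB']) (use ab in \<open>auto simp: abs_le_iff\<close>)
    then show ?thesis using suminf_minus[OF sa'] by simp
  qed
  moreover have "(\<Sum>i. B * x (i + N)) = B * (\<Sum>i. x (i + N))"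
    by (rule suminf_mult) (rule summable_ignore_initial_segment[OF sx])
  ultimately show "\<bar>(\<Sum>i. a i) - (\<Sum>i<N. a i)\<bar> \<le> B * ((\<Sum>i. x i) - (\<Sum>i<N. x i))"
    unfolding e1 e2 by linarith
qed

lemma cont_coord: "continuous_on S (\<lambda>\<omega>::real \<times> (nat \<Rightarrow> real). snd \<omega> i)"
  by (rule continuous_on_product_then_coordinatewise) (intro continuous_intros)

lemma cont_g:
  assumes fc: "continuous_on {0<..} f" and fb: "\<And>t. t > 0 \<Longrightarrow> \<bar>f t\<bar> \<le> B"
  shows "continuous_on Omega_P0 (\<lambda>\<omega>. \<Sum>i. hf f (snd \<omega> i))"
  unfolding continuous_on_def
proof
  fix \<omega>0 assume w0: "\<omega>0 \<in> Omega_P0"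
  define B' where "B' = \<bar>B\<bar> + 1"
  have B'pos: "B' > 0" by (simp add: B'_def)
  have hb: "\<bar>hf f t\<bar> \<le> B' * t" if "t \<ge> 0" for t
  proof -
    have "\<bar>hf f t\<bar> \<le> \<bar>B\<bar> * t" by (rule hf_bound[OF fb that])
    also have "\<dots> \<le> B' * t" using that by (intro mult_right_mono) (auto simp: B'_def)
    finally show ?thesis .
  qed
  have P0: "\<And>\<omega>. \<omega> \<in> Omega_P0 \<Longrightarrow> summable (snd \<omega>) \<and> (\<forall>i. snd \<omega> i \<ge> 0) \<and> fst \<omega> = (\<Sum>i. snd \<omega> i)"
    by (auto simp: Omega_P0_def Omega_P_def)
  define g where "g = (\<lambda>\<omega>::real \<times> (nat \<Rightarrow> real). \<Sum>i. hf f (snd \<omega> i))"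
  define G where "G = (\<lambda>N (\<omega>::real \<times> (nat \<Rightarrow> real)). \<Sum>i<N. hf f (snd \<omega> i))"
  define T where "T = (\<lambda>N (\<omega>::real \<times> (nat \<Rightarrow> real)). fst \<omega> - (\<Sum>i<N. snd \<omega> i))"
  have key: "\<bar>g \<omega> - G N \<omega>\<bar> \<le> B' * T N \<omega>" if "\<omega> \<in> Omega_P0" for \<omega> N
    using tail_bound(2)[of "snd \<omega>" "\<lambda>i. hf f (snd \<omega> i)" B' N] P0[OF that] hb
    unfolding g_def G_def T_def by auto
  have hc: "continuous_on Omega_P0 (\<lambda>\<omega>. hf f (snd \<omega> i))" for i
  proof (rule continuous_on_compose2[OF hf_cont[OF fc fb] cont_coord])
    show "(\<lambda>\<omega>. snd \<omega> i) ` Omega_P0 \<subseteq> {0..}" using P0 by auto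
  qed
  have Gc: "continuous_on Omega_P0 (G N)" for N
    unfolding G_def by (intro continuous_on_sum hc)
  have Tc: "continuous_on UNIV (T N)" for N
    unfolding T_def by (intro continuous_intros cont_coord)
  have g0: "(\<Sum>i. hf f (snd \<omega>0 i)) = g \<omega>0" by (simp add: g_def)
  show "((\<lambda>\<omega>. \<Sum>i. hf f (snd \<omega> i)) \<longlongrightarrow> (\<Sum>i. hf f (snd \<omega>0 i))) (at \<omega>0 within Omega_P0)"
    unfolding g_def[symmetric] g0
  proof (rule tendstoI)
    fix e :: real assume e: "e > 0"
    have "(\<lambda>N. \<Sum>i<N. snd \<omega>0 i) \<longlonglongrightarrow> fst \<omega>0"
      using P0[OF w0] summable_LIMSEQ by metis
    then have "(\<lambda>N. T N \<omega>0) \<longlonglongrightarrow> 0"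
      unfolding T_def using tendsto_diff[OF tendsto_const[of "fst \<omega>0"]] by fastforce
    then obtain N where N: "\<bar>T N \<omega>0\<bar> < e / (4 * B')"
    proof -
      have "e / (4 * B') > 0" using e B'pos by simp
      then obtain M where "\<forall>n\<ge>M. norm (T n \<omega>0 - 0) < e / (4 * B')"
        using \<open>(\<lambda>N. T N \<omega>0) \<longlonglongrightarrow> 0\<close> unfolding LIMSEQ_iff by blast
      then show ?thesis using that[of M] by auto
    qed
    have ev1: "eventually (\<lambda>\<omega>. dist (G N \<omega>) (G N \<omega>0) < e / 4) (at \<omega>0 within Omega_P0)"
    proof -
      have "(G N \<longlongrightarrow> G N \<omega>0) (at \<omega>0 within Omega_P0)" using Gc[of N] w0 unfolding continuous_on_def by blast
      moreover have "e / 4 > 0" using e by simp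
      ultimately show ?thesis by (rule tendstoD)
    qed
    have "(T N \<longlongrightarrow> T N \<omega>0) (at \<omega>0 within Omega_P0)"
      using Tc[of N] by (meson UNIV_I continuous_on_def tendsto_within_subset subset_UNIV)
    then have ev2: "eventually (\<lambda>\<omega>. dist (T N \<omega>) (T N \<omega>0) < e / (4 * B')) (at \<omega>0 within Omega_P0)"
      using e B'pos by (intro tendstoD) auto
    have ev3: "eventually (\<lambda>\<omega>. \<omega> \<in> Omega_P0) (at \<omega>0 within Omega_P0)"
      by (simp add: eventually_at_filter)
    show "eventually (\<lambda>\<omega>. dist (g \<omega>) (g \<omega>0) < e) (at \<omega>0 within Omega_P0)"
      using ev1 ev2 ev3
    proof eventually_elim
      case (elim \<omega>)
      have k1: "\<bar>g \<omega> - G N \<omega>\<bar> \<le> B' * T N \<omega>" by (rule key[OF elim(3)])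
      have k0: "\<bar>g \<omega>0 - G N \<omega>0\<bar> \<le> B' * T N \<omega>0" by (rule key[OF w0])
      have t1: "T N \<omega> < T N \<omega>0 + e / (4 * B')" using elim(2) by (simp add: dist_real_def)
      have "B' * T N \<omega> < B' * (T N \<omega>0 + e / (4 * B'))" using t1 B'pos by simp
      also have "\<dots> = B' * T N \<omega>0 + e / 4" using B'pos by (simp add: field_simps)
      finally have a1: "B' * T N \<omega> < B' * T N \<omega>0 + e / 4" .
      have "B' * T N \<omega>0 \<le> B' * \<bar>T N \<omega>0\<bar>" using B'pos by (intro mult_left_mono) auto
      also have "\<dots> < B' * (e / (4 * B'))" using N B'pos by (intro mult_strict_left_mono) auto
      also have "\<dots> = e / 4" using B'pos by simp
      finally have a0: "B' * T N \<omega>0 < e / 4" .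
      have "dist (G N \<omega>) (G N \<omega>0) = \<bar>G N \<omega> - G N \<omega>0\<bar>" by (simp add: dist_real_def)
      then show ?case using elim(1) k1 k0 a1 a0 unfolding dist_real_def abs_le_iff abs_less_iff by linarith
    qed
  qed
qed

definition SB :: "real measure set set" where
  "SB = {{M \<in> Mfin_pos. (\<integral>x. f x \<partial>M) \<in> U} | f U.
           continuous_on {0<..} f \<and> bounded (f ` {0<..}) \<and> open (U :: real set)}"

lemma weak_top_SB: "weak_top = subtopology (topology_generated_by SB) Mfin_pos"
  by (simp add: weak_top_def SB_def)

lemma Mfin_in_SB: "Mfin_pos \<in> SB"
proof -
  have "Mfin_pos = {M \<in> Mfin_pos. (\<integral>x. (\<lambda>_. 0::real) x \<partial>M) \<in> UNIV}" by simp
  moreover have "continuous_on {0<..} (\<lambda>_::real. 0::real) \<and> bounded ((\<lambda>_::real. 0::real) ` {0<..}) \<and> open (UNIV::real set)"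
    by (auto simp: bounded_real)
  ultimately show ?thesis unfolding SB_def by blast
qed

lemma topspace_weak: "topspace weak_top = Mfin_pos"
proof -
  have "\<Union>SB \<subseteq> Mfin_pos" by (auto simp: SB_def)
  then have "\<Union>SB = Mfin_pos" using Mfin_in_SB by blast
  then show ?thesis by (simp add: weak_top_SB)
qed

lemma Omega_P0_sub: "Omega_P0 \<subseteq> Omega_P"
  by (auto simp: Omega_P0_def)

lemma s_cont: "continuous_map (top_of_set Omega_P0) weak_top frak_s"
  unfolding weak_top_SB
proof (rule continuous_map_into_subtopology)
  show "frak_s \<in> topspace (top_of_set Omega_P0) \<rightarrow> Mfin_pos"
    using Nm_Mfin Omega_P0_sub by auto
  show "continuous_map (top_of_set Omega_P0) (topology_generated_by SB) frak_s"
  proof (rule continuous_on_generated_topo)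
    show "frak_s ` topspace (top_of_set Omega_P0) \<subseteq> \<Union>SB"
      using Nm_Mfin Omega_P0_sub Mfin_in_SB by auto
    fix V assume "V \<in> SB"
    then obtain f U where V: "V = {M \<in> Mfin_pos. (\<integral>x. f x \<partial>M) \<in> U}"
      and fc: "continuous_on {0<..} f" and fbd: "bounded (f ` {0<..})" and U: "open (U::real set)"
      unfolding SB_def by blast
    obtain B where fb: "\<And>t. t > 0 \<Longrightarrow> \<bar>f t\<bar> \<le> B"
      using fbd unfolding bounded_real by auto
    have eq: "frak_s -` V \<inter> topspace (top_of_set Omega_P0) = Omega_P0 \<inter> (\<lambda>\<omega>. \<Sum>i. hf f (snd \<omega> i)) -` U"
    proof -
      have "(\<integral>x. f x \<partial>frak_s \<omega>) = (\<Sum>i. hf f (snd \<omega> i))" if "\<omega> \<in> Omega_P0" for \<omega>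
        using integral_Nm(2)[OF subsetD[OF Omega_P0_sub that] fc fb] by (simp add: frak_s_eq hf_wt)
      then show ?thesis using V Nm_Mfin Omega_P0_sub by auto
    qed
    show "openin (top_of_set Omega_P0) (frak_s -` V \<inter> topspace (top_of_set Omega_P0))"
      unfolding eq by (rule continuous_openin_preimage_gen[OF cont_g[OF fc fb] U])
  qed
qed

definition proj :: "real \<times> (nat \<Rightarrow> real) \<Rightarrow> real \<times> (nat \<Rightarrow> real)" where
  "proj \<omega> = ((\<Sum>i. snd \<omega> i), snd \<omega>)"

lemma proj_meas: "proj \<in> measurable borel borel"
proof -
  have c: "(\<lambda>\<omega>::real \<times> (nat \<Rightarrow> real). snd \<omega> i) \<in> borel_measurable borel" for i
    by (rule borel_measurable_continuous_onI[OF cont_coord])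
  have s1: "(\<lambda>\<omega>::real \<times> (nat \<Rightarrow> real). \<Sum>i. snd \<omega> i) \<in> borel_measurable borel"
    by (rule borel_measurable_suminf[OF c])
  have s2: "(snd :: real \<times> (nat \<Rightarrow> real) \<Rightarrow> _) \<in> measurable borel borel"
    by (rule borel_measurable_continuous_onI) (intro continuous_intros)
  have "(\<lambda>\<omega>::real \<times> (nat \<Rightarrow> real). ((\<Sum>i. snd \<omega> i), snd \<omega>)) \<in> measurable borel (borel \<Otimes>\<^sub>M borel)"
    using s1 s2 by (rule measurable_Pair)
  then show ?thesis unfolding borel_prod proj_def .
qed

lemma proj_P0: "\<omega> \<in> Omega_P \<Longrightarrow> proj \<omega> \<in> Omega_P0"
  by (auto simp: proj_def Omega_P0_def Omega_P_def)

lemma snd_proj: "snd (proj \<omega>) = snd \<omega>"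
  by (simp add: proj_def)

lemma frak_s_proj: "frak_s (proj \<omega>) = frak_s \<omega>"
  unfolding frak_s_def by (simp only: snd_proj)

lemma s_meas: "frak_s \<in> measurable (restrict_space borel Omega_P) (borel_of weak_top)"
  unfolding borel_of_def
proof (rule measurable_measure_of)
  show "{U. openin weak_top U} \<subseteq> Pow (topspace weak_top)"
    using openin_subset by auto
  show "frak_s \<in> space (restrict_space borel Omega_P) \<rightarrow> topspace weak_top"
    using Nm_Mfin by (auto simp: topspace_weak space_restrict_space)
  fix U assume "U \<in> {U. openin weak_top U}"
  then have "openin weak_top U" by simp
  then have "openin (top_of_set Omega_P0) {\<omega> \<in> topspace (top_of_set Omega_P0). frak_s \<omega> \<in> U}"
    by (rule openin_continuous_map_preimage[OF s_cont])
  then obtain T where T: "open T" and eqT: "{\<omega> \<in> Omega_P0. frak_s \<omega> \<in> U} = Omega_P0 \<inter> T"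
    unfolding openin_open by auto
  have eq: "frak_s -` U \<inter> space (restrict_space borel Omega_P) = Omega_P \<inter> (proj -` T \<inter> space borel)"
  proof -
    have "frak_s \<omega> \<in> U \<longleftrightarrow> proj \<omega> \<in> T" if "\<omega> \<in> Omega_P" for \<omega>
    proof -
      have "frak_s \<omega> \<in> U \<longleftrightarrow> proj \<omega> \<in> {\<omega> \<in> Omega_P0. frak_s \<omega> \<in> U}"
        using proj_P0[OF that] frak_s_proj[of \<omega>] by auto
      also have "\<dots> \<longleftrightarrow> proj \<omega> \<in> T" unfolding eqT using proj_P0[OF that] by auto
      finally show ?thesis .
    qed
    then show ?thesis by (auto simp: space_restrict_space)
  qed
  have "proj -` T \<inter> space borel \<in> sets borel"
    by (rule measurable_sets[OF proj_meas]) (use T in simp)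
  then show "frak_s -` U \<inter> space (restrict_space borel Omega_P) \<in> sets (restrict_space borel Omega_P)"
    unfolding eq sets_restrict_space by blast
qed

lemma Kc_compact: "compact {\<omega> \<in> Omega_P. fst \<omega> \<le> C}"
proof -
  define Kc where "Kc = {\<omega>::real \<times> (nat \<Rightarrow> real). (\<forall>i. snd \<omega> (Suc i) \<le> snd \<omega> i) \<and> (\<forall>i. 0 \<le> snd \<omega> i)
      \<and> (\<forall>n. (\<Sum>i<n. snd \<omega> i) \<le> fst \<omega>) \<and> fst \<omega> \<le> C}"
  have eq: "{\<omega> \<in> Omega_P. fst \<omega> \<le> C} = Kc"
  proof (intro set_eqI iffI)
    fix \<omega> assume "\<omega> \<in> {\<omega> \<in> Omega_P. fst \<omega> \<le> C}"
    then have a: "\<forall>i. snd \<omega> (Suc i) \<le> snd \<omega> i" "\<forall>i. 0 \<le> snd \<omega> i" "summable (snd \<omega>)"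
      "(\<Sum>i. snd \<omega> i) \<le> fst \<omega>" "fst \<omega> \<le> C"
      by (auto simp: Omega_P_def)
    have "(\<Sum>i<n. snd \<omega> i) \<le> fst \<omega>" for n
      using sum_le_suminf[OF a(3), of "{..<n}"] a(2,4) by auto
    then show "\<omega> \<in> Kc" using a by (auto simp: Kc_def)
  next
    fix \<omega> assume "\<omega> \<in> Kc"
    then have a: "\<forall>i. snd \<omega> (Suc i) \<le> snd \<omega> i" "\<forall>i. 0 \<le> snd \<omega> i"
      "\<And>n. (\<Sum>i<n. snd \<omega> i) \<le> fst \<omega>" "fst \<omega> \<le> C"
      by (auto simp: Kc_def)
    have s: "summable (snd \<omega>)" by (rule summableI_nonneg_bounded[of _ "fst \<omega>"]) (use a in auto)
    have "(\<Sum>i. snd \<omega> i) \<le> fst \<omega>" by (rule suminf_le_const[OF s a(3)])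
    then show "\<omega> \<in> {\<omega> \<in> Omega_P. fst \<omega> \<le> C}" using a s
      by (cases \<omega>) (auto simp: Omega_P_def)
  qed
  have cl: "closed Kc"
    unfolding Kc_def
    by (intro closed_Collect_conj closed_Collect_all closed_Collect_le continuous_intros cont_coord)
  define Bx where "Bx = {0..C} \<times> (PiE UNIV (\<lambda>_::nat. {0..C::real}))"
  have "compactin (product_topology (\<lambda>_. euclidean) UNIV) (PiE UNIV (\<lambda>_::nat. {0..C::real}))"
    by (subst compactin_PiE) auto
  then have "compact (PiE UNIV (\<lambda>_::nat. {0..C::real}))"
    unfolding euclidean_product_topology by simp
  then have cB: "compact Bx" unfolding Bx_def by (intro compact_Times) auto
  have sub: "Kc \<subseteq> Bx"
  proof
    fix \<omega> assume "\<omega> \<in> Kc"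
    then have a: "\<forall>i. 0 \<le> snd \<omega> i" "\<And>n. (\<Sum>i<n. snd \<omega> i) \<le> fst \<omega>" "fst \<omega> \<le> C"
      by (auto simp: Kc_def)
    have g0: "0 \<le> fst \<omega>" using a(2)[of 0] by simp
    have "snd \<omega> i \<le> fst \<omega>" for i
    proof -
      have "snd \<omega> i \<le> (\<Sum>j<Suc i. snd \<omega> j)"
        using a(1) by (intro member_le_sum) auto
      then show ?thesis using a(2)[of "Suc i"] by linarith
    qed
    moreover have "snd \<omega> \<in> PiE UNIV (\<lambda>_::nat. {0..C::real})"
      using a(1,3) calculation by (auto simp: PiE_iff intro: order_trans)
    ultimately show "\<omega> \<in> Bx" unfolding Bx_def using a g0 by (simp add: mem_Times_iff)
  qed
  have "compact (Kc \<inter> Bx)" using cl cB by (rule closed_Int_compact)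
  then show ?thesis using eq sub by (simp add: Int_absorb2)
qed

definition fn :: "nat \<Rightarrow> real \<Rightarrow> real" where
  "fn n t = min 1 (max 0 (t - real n))"

lemma fn_cont: "continuous_on A (fn n)"
  unfolding fn_def by (intro continuous_intros)

lemma fn_bounded: "bounded (fn n ` A)"
  unfolding bounded_real fn_def by (intro exI[of _ 1]) auto

lemma one_cont: "continuous_on A (\<lambda>_::real. 1::real)" by simp

lemma one_bounded: "bounded ((\<lambda>_::real. 1::real) ` A)"
  unfolding bounded_real by (intro exI[of _ 1]) auto

definition Wn :: "nat \<Rightarrow> real measure set" where
  "Wn n = {M \<in> Mfin_pos. (\<integral>x. (\<lambda>_. 1::real) x \<partial>M) \<in> {..<real n}}
        \<inter> {M \<in> Mfin_pos. (\<integral>x. fn n x \<partial>M) \<in> {..<1/2}}"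

lemma Wn_open: "openin weak_top (Wn n)"
proof -
  have a: "{M \<in> Mfin_pos. (\<integral>x. (\<lambda>_. 1::real) x \<partial>M) \<in> {..<real n}} \<in> SB"
    unfolding SB_def mem_Collect_eq
    by (rule exI[of _ "\<lambda>_. 1"], rule exI[of _ "{..<real n}"]) (simp add: one_bounded)
  have b: "{M \<in> Mfin_pos. (\<integral>x. fn n x \<partial>M) \<in> {..<1/2}} \<in> SB"
    unfolding SB_def mem_Collect_eq
    by (rule exI[of _ "fn n"], rule exI[of _ "{..<1/2}"]) (simp add: fn_bounded fn_cont)
  have "openin (topology_generated_by SB) (Wn n)"
    unfolding Wn_def by (intro openin_Int topology_generated_by_Basis a b)
  moreover have "Wn n = Wn n \<inter> Mfin_pos" by (auto simp: Wn_def)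
  ultimately show ?thesis unfolding weak_top_SB openin_subtopology by blast
qed

lemma Wn_cover:
  assumes M: "M \<in> Mfin_pos"
  shows "\<exists>n. M \<in> Wn n"
proof -
  from M have sM: "sets M = sets pos_borel" and fM: "finite_measure M" by (auto simp: Mfin_pos_def)
  interpret finite_measure M by (rule fM)
  have meas: "fn n \<in> borel_measurable M" for n
    unfolding measurable_cong_sets[OF sM refl] pos_borel_def
    by (rule borel_measurable_continuous_on_restrict[OF fn_cont])
  have lim: "(\<lambda>n. \<integral>x. fn n x \<partial>M) \<longlonglongrightarrow> (\<integral>x. (\<lambda>_. 0::real) x \<partial>M)"
  proof (rule integral_dominated_convergence[where w="\<lambda>_. 1"])
    show "(\<lambda>_. 0::real) \<in> borel_measurable M" by simp
    show "fn n \<in> borel_measurable M" for n by (rule meas)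
    show "integrable M (\<lambda>_. 1::real)" by simp
    show "AE x in M. (\<lambda>n. fn n x) \<longlonglongrightarrow> 0"
    proof (rule AE_I2, rule tendsto_eventually)
      fix x :: real
      obtain m :: nat where "x \<le> real m" using real_arch_simple by blast
      then show "eventually (\<lambda>n. fn n x = 0) sequentially"
        unfolding eventually_sequentially by (intro exI[of _ m]) (auto simp: fn_def)
    qed
    show "AE x in M. norm (fn n x) \<le> 1" for n by (auto simp: fn_def)
  qed
  then have "eventually (\<lambda>n. (\<integral>x. fn n x \<partial>M) < 1/2) sequentially"
    by (intro order_tendstoD(2)) auto
  moreover obtain m :: nat where "(\<integral>x. (\<lambda>_. 1::real) x \<partial>M) < real m"
    using reals_Archimedean2 by blast
  then have "eventually (\<lambda>n. (\<integral>x. (\<lambda>_. 1::real) x \<partial>M) < real n) sequentially"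
    unfolding eventually_sequentially by (intro exI[of _ m]) auto
  ultimately have "eventually (\<lambda>n. M \<in> Wn n) sequentially"
    by eventually_elim (use M in \<open>auto simp: Wn_def\<close>)
  then show ?thesis using eventually_happens' by (metis sequentially_bot)
qed

lemma Wn_point:
  assumes om: "\<omega> \<in> Omega_P0" and W: "frak_s \<omega> \<in> Wn n"
  shows "fst \<omega> \<le> (real n + 1) * real n"
proof -
  have omP: "\<omega> \<in> Omega_P" using om Omega_P0_sub by auto
  have P: "summable (snd \<omega>)" "\<And>i. snd \<omega> i \<ge> 0" "fst \<omega> = (\<Sum>i. snd \<omega> i)"
    using om by (auto simp: Omega_P0_def Omega_P_def)
  have i1: "(\<integral>x. (\<lambda>_. 1::real) x \<partial>frak_s \<omega>) = (\<Sum>i. wt \<omega> i * 1)"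
    unfolding frak_s_eq by (rule integral_Nm(2)[OF omP one_cont, where B=1]) simp
  have i2: "(\<integral>x. fn n x \<partial>frak_s \<omega>) = (\<Sum>i. wt \<omega> i * fn n (yt \<omega> i))"
    unfolding frak_s_eq by (rule integral_Nm(2)[OF omP fn_cont, where B=1]) (auto simp: fn_def)
  have s2: "summable (\<lambda>i. wt \<omega> i * fn n (yt \<omega> i))"
    by (rule integral_Nm(1)[OF omP fn_cont, where B=1]) (auto simp: fn_def)
  from W have w1: "(\<Sum>i. wt \<omega> i) < real n" and w2: "(\<Sum>i. wt \<omega> i * fn n (yt \<omega> i)) < 1/2"
    using i1 i2 by (auto simp: Wn_def)
  have xb: "snd \<omega> i \<le> real n + 1" for i
  proof (rule ccontr)
    assume "\<not> ?thesis"
    then have g: "snd \<omega> i > real n + 1" by simp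
    then have "wt \<omega> i * fn n (yt \<omega> i) = 1" by (auto simp: wt_def yt_def fn_def)
    moreover have "(\<Sum>j\<in>{i}. wt \<omega> j * fn n (yt \<omega> j)) \<le> (\<Sum>j. wt \<omega> j * fn n (yt \<omega> j))"
      by (rule sum_le_suminf[OF s2]) (auto simp: fn_def wt_nonneg)
    ultimately show False using w2 by simp
  qed
  have xw: "snd \<omega> i \<le> (real n + 1) * wt \<omega> i" for i
  proof (cases "snd \<omega> i > 1")
    case True
    then show ?thesis using xb[of i] by (simp add: wt_def)
  next
    case False
    then have "wt \<omega> i = snd \<omega> i" using P(2)[of i] by (auto simp: wt_def)
    then show ?thesis using P(2)[of i] by (simp add: algebra_simps)
  qed
  have "fst \<omega> \<le> (\<Sum>i. (real n + 1) * wt \<omega> i)"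
    unfolding P(3) by (rule suminf_le[OF xw P(1) summable_mult[OF summable_wt[OF omP]]])
  also have "\<dots> = (real n + 1) * (\<Sum>i. wt \<omega> i)"
    by (rule suminf_mult[OF summable_wt[OF omP]])
  also have "\<dots> \<le> (real n + 1) * real n"
    using w1 by (intro mult_left_mono) auto
  finally show ?thesis .
qed

lemma K_bound:
  assumes K: "compactin weak_top K"
  shows "\<exists>C. \<forall>\<omega>\<in>Omega_P0. frak_s \<omega> \<in> K \<longrightarrow> fst \<omega> \<le> C"
proof -
  have Ksub: "K \<subseteq> Mfin_pos" using K compactin_subset_topspace topspace_weak by metis
  have "\<exists>F. finite F \<and> F \<subseteq> range Wn \<and> K \<subseteq> \<Union>F"
    using K unfolding compactin_def
  proof (elim conjE allE impE)
    show "(\<forall>U\<in>range Wn. openin weak_top U) \<and> K \<subseteq> \<Union>(range Wn)"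
      using Wn_open Wn_cover Ksub by blast
  qed auto
  then obtain F where F: "finite F" "F \<subseteq> range Wn" "K \<subseteq> \<Union>F" by blast
  then obtain J where J: "finite J" "F = Wn ` J"
    using finite_subset_image[OF F(1) F(2)] by blast
  define Nn where "Nn = Max (insert 0 J)"
  have "fst \<omega> \<le> (real Nn + 1) * real Nn" if om: "\<omega> \<in> Omega_P0" and inK: "frak_s \<omega> \<in> K" for \<omega>
  proof -
    obtain n where n: "n \<in> J" "frak_s \<omega> \<in> Wn n" using F(3) J(2) inK by blast
    have "n \<le> Nn" unfolding Nn_def using J(1) n(1) by auto
    then have "(real n + 1) * real n \<le> (real Nn + 1) * real Nn"
      by (intro mult_mono) auto
    then show ?thesis using Wn_point[OF om n(2)] by linarith
  qed
  then show ?thesis by blast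
qed

theorem mainTheorem7:
  fixes I :: "'i set"
    and P :: "'i \<Rightarrow> real measure measure"
    and Q :: "'i \<Rightarrow> (real \<times> (nat \<Rightarrow> real)) measure"
  assumes P_fin: "\<And>\<alpha>. \<alpha> \<in> I \<Longrightarrow> sets (P \<alpha>) = sets (borel_of weak_top) \<and> finite_measure (P \<alpha>)"
    and P_supp: "\<And>\<alpha>. \<alpha> \<in> I \<Longrightarrow>
        \<exists>N \<in> null_sets (P \<alpha>). topspace weak_top - frak_s ` Omega_P \<subseteq> N"
    and P_tight: "tight_family weak_top I P"
    and Q_sets: "\<And>\<alpha>. \<alpha> \<in> I \<Longrightarrow> sets (Q \<alpha>) = sets (restrict_space borel Omega_P)"
    and Q_push: "\<And>\<alpha>. \<alpha> \<in> I \<Longrightarrow> distr (Q \<alpha>) (borel_of weak_top) frak_s = P \<alpha>"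
    and Q_P0: "\<And>\<alpha>. \<alpha> \<in> I \<Longrightarrow> emeasure (Q \<alpha>) (Omega_P - Omega_P0) = 0"
  shows "tight_family (subtopology euclidean Omega_P) I Q"

proof -
  have P0meas: "Omega_P - Omega_P0 \<in> sets (restrict_space borel Omega_P)"
  proof -
    have fm: "(fst :: real \<times> (nat \<Rightarrow> real) \<Rightarrow> real) \<in> borel_measurable borel"
      by (rule borel_measurable_continuous_onI) (intro continuous_intros)
    have m1: "(\<lambda>\<omega>. fst (proj \<omega>)) \<in> borel_measurable borel"
      by (rule measurable_compose[OF proj_meas fm])
    have m2: "(\<lambda>\<omega>. fst \<omega> - fst (proj \<omega>)) \<in> borel_measurable borel"
      using fm m1 by (rule borel_measurable_diff)
    have D: "(\<lambda>\<omega>. fst \<omega> - fst (proj \<omega>)) -` {0} \<inter> space borel \<in> sets borel"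
      by (rule measurable_sets[OF m2]) simp
    have "Omega_P - Omega_P0 = Omega_P \<inter> (space borel - ((\<lambda>\<omega>. fst \<omega> - fst (proj \<omega>)) -` {0} \<inter> space borel))"
      by (auto simp: Omega_P0_def proj_def)
    moreover have "space borel - ((\<lambda>\<omega>. fst \<omega> - fst (proj \<omega>)) -` {0} \<inter> space borel) \<in> sets borel"
      using D by blast
    ultimately show ?thesis unfolding sets_restrict_space by blast
  qed
  show ?thesis
    unfolding tight_family_def
  proof (intro allI impI)
    fix \<epsilon> :: real assume \<epsilon>: "\<epsilon> > 0"
    obtain K where K: "compactin weak_top K"
      and KP: "\<forall>\<alpha>\<in>I. topspace weak_top - K \<in> sets (P \<alpha>) \<and> emeasure (P \<alpha>) (topspace weak_top - K) < ennreal \<epsilon>"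
      using P_tight \<epsilon> unfolding tight_family_def by blast
    obtain C where C: "\<forall>\<omega>\<in>Omega_P0. frak_s \<omega> \<in> K \<longrightarrow> fst \<omega> \<le> C"
      using K_bound[OF K] by blast
    define K' where "K' = {\<omega> \<in> Omega_P. fst \<omega> \<le> C}"
    have cK': "compactin (top_of_set Omega_P) K'"
      unfolding compactin_subtopology K'_def using Kc_compact by auto
    have clK': "closed K'" unfolding K'_def by (rule compact_imp_closed[OF Kc_compact])
    have "\<forall>\<alpha>\<in>I. topspace (top_of_set Omega_P) - K' \<in> sets (Q \<alpha>) \<and>
          emeasure (Q \<alpha>) (topspace (top_of_set Omega_P) - K') < ennreal \<epsilon>"
    proof
      fix \<alpha> assume \<alpha>: "\<alpha> \<in> I"
      have spQ: "space (Q \<alpha>) = Omega_P"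
        using sets_eq_imp_space_eq[OF Q_sets[OF \<alpha>]] by (simp add: space_restrict_space)
      have setK: "Omega_P - K' \<in> sets (Q \<alpha>)"
      proof -
        have "- K' \<in> sets borel" using clK' by (intro borel_open) (simp add: open_Compl)
        moreover have "Omega_P - K' = Omega_P \<inter> - K'" by auto
        ultimately show ?thesis unfolding Q_sets[OF \<alpha>] sets_restrict_space by blast
      qed
      have sm: "frak_s \<in> measurable (Q \<alpha>) (borel_of weak_top)"
        using s_meas measurable_cong_sets[OF Q_sets[OF \<alpha>] refl] by blast
      define A where "A = topspace weak_top - K"
      have A: "A \<in> sets (borel_of weak_top)" using KP P_fin \<alpha> unfolding A_def by blast
      have PA: "emeasure (P \<alpha>) A = emeasure (Q \<alpha>) (frak_s -` A \<inter> space (Q \<alpha>))"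
        unfolding Q_push[OF \<alpha>, symmetric] by (rule emeasure_distr[OF sm A])
      have setA: "frak_s -` A \<inter> space (Q \<alpha>) \<in> sets (Q \<alpha>)"
        by (rule measurable_sets[OF sm A])
      have set0: "Omega_P - Omega_P0 \<in> sets (Q \<alpha>)" using P0meas Q_sets[OF \<alpha>] by simp
      have sub: "Omega_P - K' \<subseteq> (Omega_P - Omega_P0) \<union> (frak_s -` A \<inter> space (Q \<alpha>))"
      proof
        fix \<omega> assume w: "\<omega> \<in> Omega_P - K'"
        show "\<omega> \<in> (Omega_P - Omega_P0) \<union> (frak_s -` A \<inter> space (Q \<alpha>))"
        proof (cases "\<omega> \<in> Omega_P0")
          case True
          have "fst \<omega> > C" using w by (auto simp: K'_def)
          then have "frak_s \<omega> \<notin> K" using C True by force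
          moreover have "frak_s \<omega> \<in> topspace weak_top" using Nm_Mfin w by (auto simp: topspace_weak)
          ultimately show ?thesis using w spQ by (auto simp: A_def)
        next
          case False
          then show ?thesis using w by auto
        qed
      qed
      have "emeasure (Q \<alpha>) (Omega_P - K') \<le> emeasure (Q \<alpha>) ((Omega_P - Omega_P0) \<union> (frak_s -` A \<inter> space (Q \<alpha>)))"
        by (rule emeasure_mono[OF sub]) (use set0 setA in blast)
      also have "\<dots> \<le> emeasure (Q \<alpha>) (Omega_P - Omega_P0) + emeasure (Q \<alpha>) (frak_s -` A \<inter> space (Q \<alpha>))"
        by (rule emeasure_subadditive[OF set0 setA])
      also have "\<dots> = emeasure (P \<alpha>) A" using Q_P0[OF \<alpha>] PA by simp
      also have "\<dots> < ennreal \<epsilon>" using KP \<alpha> unfolding A_def by blast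
      finally show "topspace (top_of_set Omega_P) - K' \<in> sets (Q \<alpha>) \<and>
          emeasure (Q \<alpha>) (topspace (top_of_set Omega_P) - K') < ennreal \<epsilon>"
        using setK by simp
    qed
    then show "\<exists>K. compactin (top_of_set Omega_P) K \<and>
       (\<forall>\<alpha>\<in>I. topspace (top_of_set Omega_P) - K \<in> sets (Q \<alpha>) \<and>
          emeasure (Q \<alpha>) (topspace (top_of_set Omega_P) - K) < ennreal \<epsilon>)"
      using cK' by blast
  qed
qed

end
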